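(* Let $M_0$ be a primitive hyperbolic $2$-elementary sublattice of $L_{K3}$ and $\widetilde M_0=M_0\oplus\mathbb{Z}e\subset L_2$. Then $\Delta(M_0^{\perp_{L_{K3}}})=\Delta(\widetilde M_0^{\perp_{L_2}})$.
   Context: $L_{K3}=U^{\oplus3}\oplus E_8^{\oplus2}$ (even unimodular, $E_8$ negative definite), $L_2=L_{K3}\oplus\mathbb{Z}e$ with $e^2=-2$, $(e,L_{K3})=0$; note $\widetilde M_0^{\perp_{L_2}}=M_0^{\perp_{L_{K3}}}$. $\Delta(M_0^{\perp_{L_{K3}}})=\{d\in M_0^{\perp}: d^2=-2\}$ and $\Delta(\widetilde M_0^{\perp_{L_2}})=\{\delta\in\widetilde M_0^{\perp}:\ \delta^2=-2,\ \text{or}\ \delta^2=-10\text{ and }(\delta,L_2)=2\mathbb{Z}\}$. *)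

theory Defs
  imports Main
begin

text \<open>Coordinates 0..21 carry
  L_K3 = U^3 + E8(-1)^2 (indices 0..5: three copies of U; 6..13 and 14..21: two copies of
  the negative definite E8), coordinate 22 carries the extra generator e with e^2 = -2.
  L_K3 is the set of vectors supported on {0..<22}, L_2 those supported on {0..<23};
  thus L_K3 is literally a sublattice of L_2 and e is orthogonal to it.\<close>

definition e8_adj :: "nat \<Rightarrow> nat \<Rightarrow> bool" where
  "e8_adj a b \<longleftrightarrow> (a, b) \<in> {(0,2),(2,3),(3,4),(4,5),(5,6),(6,7),(1,3)}"

text \<open>Gram matrix of the negative definite E8 lattice (minus the Cartan matrix).\<close>
definition e8_gram :: "nat \<Rightarrow> nat \<Rightarrow> int" where
  "e8_gram a b = (if a = b then -2 else if e8_adj a b \<or> e8_adj b a then 1 else 0)"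

definition gram :: "nat \<Rightarrow> nat \<Rightarrow> int" where
  "gram i j =
    (if i < 6 \<and> j < 6 then (if i div 2 = j div 2 \<and> i \<noteq> j then 1 else 0)
     else if 6 \<le> i \<and> i < 14 \<and> 6 \<le> j \<and> j < 14 then e8_gram (i - 6) (j - 6)
     else if 14 \<le> i \<and> i < 22 \<and> 14 \<le> j \<and> j < 22 then e8_gram (i - 14) (j - 14)
     else if i = 22 \<and> j = 22 then -2
     else 0)"

definition bil :: "(nat \<Rightarrow> int) \<Rightarrow> (nat \<Rightarrow> int) \<Rightarrow> int" where
  "bil x y = (\<Sum>i<23. \<Sum>j<23. x i * gram i j * y j)"

definition LK3 :: "(nat \<Rightarrow> int) set" where
  "LK3 = {x. \<forall>i\<ge>22. x i = 0}"

definition L2 :: "(nat \<Rightarrow> int) set" where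
  "L2 = {x. \<forall>i\<ge>23. x i = 0}"

definition evec :: "nat \<Rightarrow> int" where
  "evec = (\<lambda>i. if i = 22 then 1 else 0)"

definition sublattice :: "(nat \<Rightarrow> int) set \<Rightarrow> (nat \<Rightarrow> int) set \<Rightarrow> bool" where
  "sublattice M L \<longleftrightarrow> M \<subseteq> L \<and> (\<lambda>i. 0) \<in> M \<and>
     (\<forall>x\<in>M. \<forall>y\<in>M. (\<lambda>i. x i + y i) \<in> M) \<and> (\<forall>x\<in>M. (\<lambda>i. - x i) \<in> M)"

definition primitive_in :: "(nat \<Rightarrow> int) set \<Rightarrow> (nat \<Rightarrow> int) set \<Rightarrow> bool" where
  "primitive_in M L \<longleftrightarrow> (\<forall>x\<in>L. \<forall>n::int. n \<noteq> 0 \<longrightarrow> (\<lambda>i. n * x i) \<in> M \<longrightarrow> x \<in> M)"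

text \<open>Hyperbolic: signature (1, rank - 1), i.e. there is a vector of positive square whose
  orthogonal complement in M is negative definite (this also forces nondegeneracy).\<close>
definition hyperbolic :: "(nat \<Rightarrow> int) set \<Rightarrow> bool" where
  "hyperbolic M \<longleftrightarrow> (\<exists>v\<in>M. bil v v > 0 \<and>
     (\<forall>w\<in>M. bil v w = 0 \<and> w \<noteq> (\<lambda>i. 0) \<longrightarrow> bil w w < 0))"

text \<open>2-elementary: the discriminant group M^*/M, with M^* = Hom(M, Z) and M embedded via
  m |-> (m, -), is killed by 2: every twice a homomorphism M -> Z is of the form (m, -).\<close>
definition two_elementary :: "(nat \<Rightarrow> int) set \<Rightarrow> bool" where
  "two_elementary M \<longleftrightarrow> (\<forall>f :: (nat \<Rightarrow> int) \<Rightarrow> int.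
     (\<forall>x\<in>M. \<forall>y\<in>M. f (\<lambda>i. x i + y i) = f x + f y) \<longrightarrow>
     (\<exists>m\<in>M. \<forall>x\<in>M. 2 * f x = bil m x))"

definition orth_in :: "(nat \<Rightarrow> int) set \<Rightarrow> (nat \<Rightarrow> int) set \<Rightarrow> (nat \<Rightarrow> int) set" where
  "orth_in S L = {x\<in>L. \<forall>y\<in>S. bil x y = 0}"

definition Mtilde :: "(nat \<Rightarrow> int) set \<Rightarrow> (nat \<Rightarrow> int) set" where
  "Mtilde M = {(\<lambda>i. m i + k * evec i) | m k. m \<in> M}"

definition Delta_K3 :: "(nat \<Rightarrow> int) set \<Rightarrow> (nat \<Rightarrow> int) set" where
  "Delta_K3 S = {d\<in>S. bil d d = -2}"

definition Delta_L2 :: "(nat \<Rightarrow> int) set \<Rightarrow> (nat \<Rightarrow> int) set" where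
  "Delta_L2 S = {d\<in>S. bil d d = -2 \<or>
      (bil d d = -10 \<and> (\<lambda>x. bil d x) ` L2 = {2 * k | k. True})}"

end

theory Submission
  imports Defs
begin

definition uvec :: "nat \<Rightarrow> nat \<Rightarrow> int" where
  "uvec j = (\<lambda>i. if i = j then 1 else 0)"

lemma bil_uvec: "j < 23 \<Longrightarrow> bil x (uvec j) = (\<Sum>i<23. x i * gram i j)"
  unfolding bil_def uvec_def
  by (simp add: if_distrib[of "\<lambda>t. _ * t"] sum.If_cases cong: sum.cong)

lemma bil_expand: "bil x y = (\<Sum>j<23. y j * bil x (uvec j))"
  unfolding bil_def
  apply (subst sum.swap)
  apply (rule sum.cong[OF refl])
  apply (subst bil_uvec[unfolded bil_def], simp)
  by (simp add: sum_distrib_left mult.commute mult.left_commute)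

lemma bil_evec: "bil x evec = -2 * x 22"
proof -
  have "bil x evec = bil x (uvec 22)" by (simp add: evec_def uvec_def)
  also have "\<dots> = (\<Sum>i<23. x i * gram i 22)" by (rule bil_uvec) simp
  also have "\<dots> = (\<Sum>i\<in>{22}. x i * gram i 22)"
    by (rule sum.mono_neutral_right) (auto simp: gram_def)
  finally show ?thesis by (simp add: gram_def)
qed

lemma bil_add: "bil x (\<lambda>i. y i + z i) = bil x y + bil x z"
  unfolding bil_def by (simp add: algebra_simps sum.distrib)

lemma bil_smult: "bil x (\<lambda>i. k * y i) = k * bil x y"
  unfolding bil_def by (simp add: sum_distrib_left algebra_simps)

lemma L23: "{..<23::nat} = {0,1,2,3,4,5,6,7,8,9,10,11,12,13,14,15,16,17,18,19,20,21,22}"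
  by (rule set_eqI, simp only: lessThan_iff insert_iff empty_iff, presburger)

lemma parity:
  fixes d :: "nat \<Rightarrow> int"
  assumes ev: "\<And>j. j < 23 \<Longrightarrow> even (\<Sum>i<23. d i * gram i j)"
    and d22: "d 22 = 0"
  shows "\<forall>j<23. even (d j)"
proof -
  note E = ev[of 0] ev[of 1] ev[of 2] ev[of 3] ev[of 4] ev[of 5] ev[of 6] ev[of 7] ev[of 8]
    ev[of 9] ev[of 10] ev[of 11] ev[of 12] ev[of 13] ev[of 14] ev[of 15] ev[of 16] ev[of 17]
    ev[of 18] ev[of 19] ev[of 20] ev[of 21]
  have F: "even (d 1)" "even (d 0)" "even (d 3)" "even (d 2)" "even (d 5)" "even (d 4)"
    "even (d 8)" "even (d 12)" "even (d 11)" "even (d 9)" "even (d 10)" "even (d 6)"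
    "even (d 7)" "even (d 13)"
    "even (d 16)" "even (d 20)" "even (d 19)" "even (d 17)" "even (d 18)" "even (d 14)"
    "even (d 15)" "even (d 21)"
    using E by (simp_all add: L23 gram_def e8_gram_def e8_adj_def; presburger)+
  show ?thesis
  proof (intro allI impI)
    fix j :: nat assume "j < 23"
    then have "j \<in> {..<23}" by simp
    then show "even (d j)" unfolding L23 using F d22 by auto
  qed
qed

theorem lemma4p2:
  fixes M0 :: "(nat \<Rightarrow> int) set"
  assumes "sublattice M0 LK3"
    and "primitive_in M0 LK3"
    and "hyperbolic M0"
    and "two_elementary M0"
  shows "Delta_K3 (orth_in M0 LK3) = Delta_L2 (orth_in (Mtilde M0) L2)"
proof -
  have z: "(\<lambda>i. 0) \<in> M0" using assms(1) unfolding sublattice_def by blast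
  have O: "orth_in (Mtilde M0) L2 = orth_in M0 LK3"
  proof
    show "orth_in (Mtilde M0) L2 \<subseteq> orth_in M0 LK3"
    proof
      fix x assume x: "x \<in> orth_in (Mtilde M0) L2"
      have "(\<lambda>i. (0::int) + 1 * evec i) \<in> Mtilde M0" unfolding Mtilde_def using z
        by (auto intro!: exI[of _ "\<lambda>i. 0"] exI[of _ 1])
      then have "bil x (\<lambda>i. (0::int) + 1 * evec i) = 0" using x unfolding orth_in_def by blast
      then have "x 22 = 0" using bil_evec[of x] by simp
      moreover have "\<forall>i\<ge>23. x i = 0" using x unfolding orth_in_def L2_def by blast
      ultimately have "x \<in> LK3" unfolding LK3_def
      proof (intro CollectI allI impI)
        fix i :: nat assume "22 \<le> i"
        then have "i = 22 \<or> 23 \<le> i" by linarith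
        then show "x i = 0" using \<open>x 22 = 0\<close> \<open>\<forall>i\<ge>23. x i = 0\<close> by blast
      qed
      moreover have "\<forall>m\<in>M0. bil x m = 0"
      proof
        fix m assume "m \<in> M0"
        then have "(\<lambda>i. m i + 0 * evec i) \<in> Mtilde M0" unfolding Mtilde_def by blast
        then show "bil x m = 0" using x unfolding orth_in_def by simp
      qed
      ultimately show "x \<in> orth_in M0 LK3" unfolding orth_in_def by blast
    qed
  next
    show "orth_in M0 LK3 \<subseteq> orth_in (Mtilde M0) L2"
    proof
      fix x assume x: "x \<in> orth_in M0 LK3"
      then have xL: "x \<in> L2" "x 22 = 0" unfolding orth_in_def LK3_def L2_def by auto
      have "\<forall>y\<in>Mtilde M0. bil x y = 0"
      proof
        fix y assume "y \<in> Mtilde M0"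
        then obtain m k where m: "m \<in> M0" "y = (\<lambda>i. m i + k * evec i)" unfolding Mtilde_def by blast
        have "bil x y = bil x m + k * bil x evec" using m(2) bil_add bil_smult by simp
        then show "bil x y = 0" using m(1) x xL(2) bil_evec[of x] unfolding orth_in_def by simp
      qed
      then show "x \<in> orth_in (Mtilde M0) L2" using xL unfolding orth_in_def by blast
    qed
  qed
  have no10: False if d: "d \<in> orth_in M0 LK3" "bil d d = -10"
      "(\<lambda>x. bil d x) ` L2 = {2 * k | k. True}" for d
  proof -
    have d22: "d 22 = 0" using d(1) unfolding orth_in_def LK3_def by auto
    have ev: "even (bil d (uvec j))" if "j < 23" for j
    proof -
      have "uvec j \<in> L2" using that unfolding L2_def uvec_def by auto
      then have "bil d (uvec j) \<in> {2 * k | k. True}" using d(3) by blast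
      then show ?thesis by auto
    qed
    have ev': "even (\<Sum>i<23. d i * gram i j)" if "j < 23" for j
      using ev[OF that] bil_uvec[OF that, of d] by simp
    have P: "\<forall>j<23. even (d j)"
      by (rule parity[of d, OF ev' d22])
    have "(4::int) dvd (\<Sum>j<23. d j * bil d (uvec j))"
    proof (rule dvd_sum)
      fix j assume "j \<in> {..<23::nat}"
      then have "even (d j)" "even (bil d (uvec j))" using P ev by auto
      then show "(4::int) dvd d j * bil d (uvec j)"
        by (metis evenE mult_dvd_mono num_double numeral_times_numeral)
    qed
    then have "(4::int) dvd bil d d" using bil_expand[of d d] by simp
    then show False using d(2) by simp
  qed
  show ?thesis unfolding O Delta_K3_def Delta_L2_def using no10 by blast
qed

end
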